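(* Let $G$ be a connected graph with a universal vertex $v$ (adjacent to all other vertices). Then $v$ is not a basis forced vertex of $G$.
   Context: All graphs are finite and simple. For vertices $u,w$ of a connected graph $G$, $d(u,w)$ is the length of a shortest $u$–$w$ path. A set $R\subseteq V(G)$ is a resolving set if for all distinct $x,y\in V(G)$ there is $r\in R$ with $d(r,x)\neq d(r,y)$. The metric dimension $\dim(G)$ is the minimum cardinality of a resolving set, and a resolving set of cardinality $\dim(G)$ is a metric basis. A vertex is a basis forced vertex if it belongs to every metric basis of $G$. *)

theory Defs
  imports Main
begin

definition simple_graph :: "'a set \<Rightarrow> ('a \<Rightarrow> 'a \<Rightarrow> bool) \<Rightarrow> bool" where
  "simple_graph V E \<longleftrightarrow> finite V
     \<and> (\<forall>u w. E u w \<longrightarrow> u \<in> V \<and> w \<in> V)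
     \<and> (\<forall>u w. E u w \<longrightarrow> E w u)
     \<and> (\<forall>u. \<not> E u u)"

definition walk :: "'a set \<Rightarrow> ('a \<Rightarrow> 'a \<Rightarrow> bool) \<Rightarrow> 'a list \<Rightarrow> bool" where
  "walk V E xs \<longleftrightarrow> xs \<noteq> [] \<and> set xs \<subseteq> V
     \<and> (\<forall>i. Suc i < length xs \<longrightarrow> E (xs ! i) (xs ! Suc i))"

definition connected_graph :: "'a set \<Rightarrow> ('a \<Rightarrow> 'a \<Rightarrow> bool) \<Rightarrow> bool" where
  "connected_graph V E \<longleftrightarrow> V \<noteq> {}
     \<and> (\<forall>u\<in>V. \<forall>w\<in>V. \<exists>xs. walk V E xs \<and> hd xs = u \<and> last xs = w)"

definition gdist :: "'a set \<Rightarrow> ('a \<Rightarrow> 'a \<Rightarrow> bool) \<Rightarrow> 'a \<Rightarrow> 'a \<Rightarrow> nat" where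
  "gdist V E u w = (LEAST n. \<exists>xs. walk V E xs \<and> hd xs = u \<and> last xs = w \<and> length xs = Suc n)"

definition resolving_set :: "'a set \<Rightarrow> ('a \<Rightarrow> 'a \<Rightarrow> bool) \<Rightarrow> 'a set \<Rightarrow> bool" where
  "resolving_set V E R \<longleftrightarrow> R \<subseteq> V
     \<and> (\<forall>x\<in>V. \<forall>y\<in>V. x \<noteq> y \<longrightarrow> (\<exists>r\<in>R. gdist V E r x \<noteq> gdist V E r y))"

definition metric_dim :: "'a set \<Rightarrow> ('a \<Rightarrow> 'a \<Rightarrow> bool) \<Rightarrow> nat" where
  "metric_dim V E = (LEAST k. \<exists>R. resolving_set V E R \<and> card R = k)"

definition metric_basis :: "'a set \<Rightarrow> ('a \<Rightarrow> 'a \<Rightarrow> bool) \<Rightarrow> 'a set \<Rightarrow> bool" where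
  "metric_basis V E R \<longleftrightarrow> resolving_set V E R \<and> card R = metric_dim V E"

definition basis_forced :: "'a set \<Rightarrow> ('a \<Rightarrow> 'a \<Rightarrow> bool) \<Rightarrow> 'a \<Rightarrow> bool" where
  "basis_forced V E v \<longleftrightarrow> (\<forall>R. metric_basis V E R \<longrightarrow> v \<in> R)"

end

theory Submission
  imports Defs
begin

lemma gdist_self:
  assumes "x \<in> V" shows "gdist V E x x = 0"
proof -
  have "walk V E [x]" using assms by (simp add: walk_def)
  then have "\<exists>xs. walk V E xs \<and> hd xs = x \<and> last xs = x \<and> length xs = Suc 0"
    by (intro exI[of _ "[x]"]) simp
  then show ?thesis unfolding gdist_def by (simp add: Least_eq_0)
qed

lemma gdist_nz:
  assumes "a \<noteq> b" "walk V E xs" "hd xs = a" "last xs = b"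
  shows "gdist V E a b \<noteq> 0"
proof
  assume "gdist V E a b = 0"
  moreover have "\<exists>n xs. walk V E xs \<and> hd xs = a \<and> last xs = b \<and> length xs = Suc n"
    using assms by (metis walk_def length_greater_0_conv Suc_pred)
  ultimately obtain ys where "walk V E ys" "hd ys = a" "last ys = b" "length ys = Suc 0"
    unfolding gdist_def using LeastI_ex[where P="\<lambda>n. \<exists>xs. walk V E xs \<and> hd xs = a \<and> last xs = b \<and> length xs = Suc n"]
    by (metis (no_types, lifting))
  then show False using assms(1)
    by (metis One_nat_def hd_conv_nth last_conv_nth length_0_conv diff_Suc_1 nat.distinct(1))
qed

lemma gdist_edge:
  assumes "a \<noteq> b" "a \<in> V" "b \<in> V" "E a b"
  shows "gdist V E a b = 1"
proof -
  have w: "walk V E [a,b]" using assms by (auto simp: walk_def less_Suc_eq)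
  have "gdist V E a b \<le> 1" unfolding gdist_def
    by (rule Least_le) (rule exI[of _ "[a,b]"], use w in simp)
  moreover have "gdist V E a b \<noteq> 0" using gdist_nz[OF assms(1) w] by simp
  ultimately show ?thesis by simp
qed

theorem lemma4:
  fixes V :: "'a set" and E :: "'a \<Rightarrow> 'a \<Rightarrow> bool" and v :: 'a
  assumes "simple_graph V E"
    and "connected_graph V E"
    and "v \<in> V"
    and "\<forall>u\<in>V. u \<noteq> v \<longrightarrow> E v u"
  shows "\<not> basis_forced V E v"
proof
  assume bf: "basis_forced V E v"
  have fin: "finite V" and sym: "\<And>u w. E u w \<Longrightarrow> E w u"
    using assms(1) by (auto simp: simple_graph_def)
  have dv: "\<And>y. y \<in> V \<Longrightarrow> y \<noteq> v \<Longrightarrow> gdist V E v y = 1"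
    using assms(3,4) gdist_edge by metis
  have dv': "\<And>y. y \<in> V \<Longrightarrow> y \<noteq> v \<Longrightarrow> gdist V E y v = 1"
    using assms(3,4) gdist_edge sym by metis
  have "resolving_set V E V"
    unfolding resolving_set_def
  proof (intro conjI ballI impI)
    fix x y assume xy: "x \<in> V" "y \<in> V" "x \<noteq> y"
    obtain xs where "walk V E xs" "hd xs = x" "last xs = y"
      using assms(2) xy unfolding connected_graph_def by blast
    then have "gdist V E x y \<noteq> 0" using gdist_nz xy(3) by metis
    then show "\<exists>r\<in>V. gdist V E r x \<noteq> gdist V E r y"
      using gdist_self[OF xy(1)] xy(1) by metis
  qed simp
  then have "\<exists>R. resolving_set V E R \<and> card R = metric_dim V E"
    unfolding metric_dim_def
    by - (rule LeastI_ex[where P="\<lambda>k. \<exists>R. resolving_set V E R \<and> card R = k"], blast)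
  then obtain R where R: "resolving_set V E R" "card R = metric_dim V E" by blast
  then have vR: "v \<in> R" using bf by (auto simp: basis_forced_def metric_basis_def)
  have RV: "R \<subseteq> V" using R by (simp add: resolving_set_def)
  have finR: "finite R" using RV fin finite_subset by blast
  define S where "S = R - {v}"
  have cS: "card S = card R - 1" "card R \<ge> 1"
    using finR vR unfolding S_def by (auto simp: card_gt_0_iff Suc_le_eq)
  have minl: "\<And>Q. resolving_set V E Q \<Longrightarrow> metric_dim V E \<le> card Q"
    unfolding metric_dim_def by (rule Least_le) blast
  have "\<not> resolving_set V E S"
  proof
    assume "resolving_set V E S"
    from minl[OF this] R(2) cS show False by simp
  qed
  then obtain a b where ab: "a \<in> V" "b \<in> V" "a \<noteq> b" "\<forall>r\<in>S. gdist V E r a = gdist V E r b"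
    using RV unfolding resolving_set_def S_def by blast
  have "gdist V E v a \<noteq> gdist V E v b"
    using R(1) ab unfolding resolving_set_def S_def by (metis DiffI singletonD)
  then have "a = v \<or> b = v" using dv ab by metis
  then obtain x where x: "x \<in> V" "x \<noteq> v" "\<forall>r\<in>S. gdist V E r x = gdist V E r v"
    using ab by metis
  have xS: "x \<notin> S"
    using x gdist_self[OF x(1)] dv'[OF x(1,2)] by fastforce
  define R' where "R' = insert x S"
  have cR': "card R' = card R"
    using xS finR cS unfolding R'_def S_def by simp
  have uniq: "\<exists>r\<in>S. gdist V E r y \<noteq> gdist V E r v" if y: "y \<in> V" "y \<noteq> v" "y \<noteq> x" for y
  proof (rule ccontr)
    assume "\<not> ?thesis"
    then have h: "\<forall>r\<in>S. gdist V E r y = gdist V E r x" using x by simp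
    obtain r where "r \<in> R" "gdist V E r y \<noteq> gdist V E r x"
      using R(1) y x unfolding resolving_set_def by metis
    moreover have "gdist V E v y = gdist V E v x" using dv y x by simp
    ultimately show False using h unfolding S_def by blast
  qed
  have "resolving_set V E R'"
    unfolding resolving_set_def
  proof (intro conjI ballI impI)
    show "R' \<subseteq> V" using RV x unfolding R'_def S_def by auto
    fix a b assume ab: "a \<in> V" "b \<in> V" "a \<noteq> b"
    obtain r where r: "r \<in> R" "gdist V E r a \<noteq> gdist V E r b"
      using R(1) ab unfolding resolving_set_def by metis
    show "\<exists>r\<in>R'. gdist V E r a \<noteq> gdist V E r b"
    proof (cases "r \<in> S")
      case True then show ?thesis using r unfolding R'_def by blast
    next
      case False
      then have "r = v" using r unfolding S_def by blast
      then have "a = v \<or> b = v" using r dv ab by metis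
      then show ?thesis
      proof
        assume av: "a = v"
        show ?thesis
        proof (cases "b = x")
          case True then show ?thesis
            using av gdist_self[OF x(1)] dv'[OF x(1,2)] unfolding R'_def by force
        next
          case False then show ?thesis using uniq[OF ab(2)] ab av unfolding R'_def by force
        qed
      next
        assume bv: "b = v"
        show ?thesis
        proof (cases "a = x")
          case True then show ?thesis
            using bv gdist_self[OF x(1)] dv'[OF x(1,2)] unfolding R'_def by force
        next
          case False then show ?thesis using uniq[OF ab(1)] ab bv unfolding R'_def by force
        qed
      qed
    qed
  qed
  then have "metric_basis V E R'" using cR' R(2) by (simp add: metric_basis_def)
  moreover have "v \<notin> R'" using x unfolding R'_def S_def by simp
  ultimately show False using bf by (simp add: basis_forced_def)
qed

end
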